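(* Let $G$ be a topological group, $m\in\mathbb N\cup\{\infty\}$, $\rho\colon G\to\mathrm{Isom}(\mathbf H^m_{\mathbb C})_o$ a representation, and suppose some $x\in\mathbf H^m_{\mathbb C}$ has total orbit. If $\rho(G)$ fixes a point of $\partial\mathbf H^m_{\mathbb C}$, then $\rho$ admits an orbitally continuous lift $\tilde\rho\colon G\to U(1,m)$ which is a homomorphism.
   Context: $\mathbf H^m_{\mathbb C}$ is the projectivization of the positive vectors of a separable complex Hilbert space with a strongly non-degenerate Hermitian form $B$ of signature $(1,m)$, with $\cosh d([v],[w])=|B(v,w)|/\sqrt{B(v,v)B(w,w)}$; its boundary is the set of isotropic lines; $U(1,m)$ is the $B$-unitary group and $\mathrm{Isom}(\mathbf H^m_{\mathbb C})_o=PU(1,m)$. A representation is an orbitally continuous homomorphism. A subset of $\mathbf H^m_{\mathbb C}$ is total if no proper closed complex subspace contains lifts of all its points. *)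

theory Defs
  imports "HOL-Analysis.Analysis" "HOL-Algebra.Group" "HOL-Library.Extended_Nat"
begin

text \<open>Standard model of a separable complex Hilbert space with a strongly non-degenerate
Hermitian form of signature (1,m), m a natural number or infinity:
vectors are square-summable sequences v : nat => complex, coordinate 0 is the
timelike one, coordinates 1..m are spacelike (v i = 0 for i > m).\<close>

type_synonym cvec = "nat \<Rightarrow> complex"

definition Vm :: "enat \<Rightarrow> cvec set" where
  "Vm m = {v. (\<forall>i. m < enat i \<longrightarrow> v i = 0) \<and> summable (\<lambda>i. (cmod (v i))\<^sup>2)}"

definition vadd :: "cvec \<Rightarrow> cvec \<Rightarrow> cvec" where
  "vadd v w = (\<lambda>i. v i + w i)"

definition vscale :: "complex \<Rightarrow> cvec \<Rightarrow> cvec" where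
  "vscale c v = (\<lambda>i. c * v i)"

definition vzero :: cvec where
  "vzero = (\<lambda>i. 0)"

definition l2dist :: "cvec \<Rightarrow> cvec \<Rightarrow> real" where
  "l2dist v w = sqrt (\<Sum>i. (cmod (v i - w i))\<^sup>2)"

definition Bf :: "cvec \<Rightarrow> cvec \<Rightarrow> complex" where
  "Bf v w = v 0 * cnj (w 0) - (\<Sum>i. v (Suc i) * cnj (w (Suc i)))"

text \<open>The complex line spanned by v (a point of the projectivization).\<close>
definition cline :: "cvec \<Rightarrow> cvec set" where
  "cline v = range (\<lambda>c. vscale c v)"

definition hyp :: "enat \<Rightarrow> cvec set set" where
  "hyp m = {cline v | v. v \<in> Vm m \<and> Re (Bf v v) > 0}"

definition bdry :: "enat \<Rightarrow> cvec set set" where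
  "bdry m = {cline v | v. v \<in> Vm m \<and> v \<noteq> vzero \<and> Bf v v = 0}"

definition hdist :: "cvec set \<Rightarrow> cvec set \<Rightarrow> real" where
  "hdist p q = (let v = (SOME v. v \<in> p \<and> v \<noteq> vzero); w = (SOME w. w \<in> q \<and> w \<noteq> vzero)
     in arcosh (cmod (Bf v w) / sqrt (Re (Bf v v) * Re (Bf w w))))"

definition Ugrp :: "enat \<Rightarrow> (cvec \<Rightarrow> cvec) set" where
  "Ugrp m = {A. bij_betw A (Vm m) (Vm m)
      \<and> (\<forall>v\<in>Vm m. \<forall>w\<in>Vm m. A (vadd v w) = vadd (A v) (A w))
      \<and> (\<forall>c. \<forall>v\<in>Vm m. A (vscale c v) = vscale c (A v))
      \<and> (\<forall>v\<in>Vm m. \<forall>w\<in>Vm m. Bf (A v) (A w) = Bf v w)}"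

text \<open>PU(1,m) = Isom(H^m_C)_o, represented by the induced action on points of
H^m_C and of its boundary (lines): an element is a map induced by some A in U(1,m).\<close>
definition PUgrp :: "enat \<Rightarrow> (cvec set \<Rightarrow> cvec set) set" where
  "PUgrp m = {f. \<exists>A\<in>Ugrp m. \<forall>p\<in>hyp m \<union> bdry m. f p = A ` p}"

definition topological_group :: "('g, 'b) monoid_scheme \<Rightarrow> 'g topology \<Rightarrow> bool" where
  "topological_group G T \<longleftrightarrow> group G \<and> topspace T = carrier G
     \<and> continuous_map (prod_topology T T) T (\<lambda>(x, y). x \<otimes>\<^bsub>G\<^esub> y)
     \<and> continuous_map T T (\<lambda>x. inv\<^bsub>G\<^esub> x)"

definition is_rep :: "('g, 'b) monoid_scheme \<Rightarrow> 'g topology \<Rightarrow> enat \<Rightarrow> ('g \<Rightarrow> cvec set \<Rightarrow> cvec set) \<Rightarrow> bool" where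
  "is_rep G T m \<rho> \<longleftrightarrow>
     (\<forall>g\<in>carrier G. \<rho> g \<in> PUgrp m)
   \<and> (\<forall>g\<in>carrier G. \<forall>h\<in>carrier G. \<forall>p\<in>hyp m \<union> bdry m. \<rho> (g \<otimes>\<^bsub>G\<^esub> h) p = \<rho> g (\<rho> h p))
   \<and> (\<forall>p\<in>hyp m. \<forall>g0\<in>carrier G. \<forall>e>0. \<exists>U. openin T U \<and> g0 \<in> U \<and>
        (\<forall>g\<in>U. hdist (\<rho> g p) (\<rho> g0 p) < e))"

definition closed_csubspace :: "enat \<Rightarrow> cvec set \<Rightarrow> bool" where
  "closed_csubspace m W \<longleftrightarrow> W \<subseteq> Vm m \<and> vzero \<in> W
     \<and> (\<forall>v\<in>W. \<forall>w\<in>W. vadd v w \<in> W) \<and> (\<forall>c. \<forall>v\<in>W. vscale c v \<in> W)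
     \<and> (\<forall>v\<in>Vm m. (\<forall>e>0. \<exists>w\<in>W. l2dist v w < e) \<longrightarrow> v \<in> W)"

definition total :: "enat \<Rightarrow> cvec set set \<Rightarrow> bool" where
  "total m S \<longleftrightarrow> (\<forall>W. closed_csubspace m W \<and> (\<forall>p\<in>S. \<exists>v\<in>W. v \<noteq> vzero \<and> cline v = p)
       \<longrightarrow> W = Vm m)"

definition is_lift :: "('g, 'b) monoid_scheme \<Rightarrow> 'g topology \<Rightarrow> enat \<Rightarrow> ('g \<Rightarrow> cvec set \<Rightarrow> cvec set) \<Rightarrow> ('g \<Rightarrow> cvec \<Rightarrow> cvec) \<Rightarrow> bool" where
  "is_lift G T m \<rho> \<rho>' \<longleftrightarrow>
     (\<forall>g\<in>carrier G. \<rho>' g \<in> Ugrp m)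
   \<and> (\<forall>g\<in>carrier G. \<forall>p\<in>hyp m \<union> bdry m. \<rho>' g ` p = \<rho> g p)
   \<and> (\<forall>g\<in>carrier G. \<forall>h\<in>carrier G. \<forall>v\<in>Vm m. \<rho>' (g \<otimes>\<^bsub>G\<^esub> h) v = \<rho>' g (\<rho>' h v))
   \<and> (\<forall>v\<in>Vm m. \<forall>g0\<in>carrier G. \<forall>e>0. \<exists>U. openin T U \<and> g0 \<in> U \<and>
        (\<forall>g\<in>U. l2dist (\<rho>' g v) (\<rho>' g0 v) < e))"

end

theory Submission
  imports Defs
begin

definition L2 :: "cvec set" where "L2 = {v. summable (\<lambda>i. (cmod (v i))\<^sup>2)}"
definition nrm2 :: "cvec \<Rightarrow> real" where "nrm2 v = (\<Sum>i. (cmod (v i))\<^sup>2)"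
definition ip :: "cvec \<Rightarrow> cvec \<Rightarrow> complex" where "ip v w = (\<Sum>i. v i * cnj (w i))"
definition sh :: "cvec \<Rightarrow> cvec" where "sh v = (\<lambda>i. v (Suc i))"

lemma Vm_L2: "v \<in> Vm m \<Longrightarrow> v \<in> L2" by (simp add: Vm_def L2_def)
lemma sq_sum_bound: "(cmod (a + b))\<^sup>2 \<le> 2*(cmod a)\<^sup>2 + 2*(cmod b)\<^sup>2"
proof -
  have "cmod (a + b) \<le> cmod a + cmod b" by (rule norm_triangle_ineq)
  hence "(cmod (a + b))\<^sup>2 \<le> (cmod a + cmod b)\<^sup>2" by (simp add: power_mono)
  also have "\<dots> \<le> 2*(cmod a)\<^sup>2 + 2*(cmod b)\<^sup>2"
    using zero_le_power2[of "cmod a - cmod b"] unfolding power2_diff power2_sum by linarith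
  finally show ?thesis .
qed
lemma L2_add: "v \<in> L2 \<Longrightarrow> w \<in> L2 \<Longrightarrow> vadd v w \<in> L2"
proof -
  assume a: "v \<in> L2" "w \<in> L2"
  have "summable (\<lambda>i. 2*(cmod (v i))\<^sup>2 + 2*(cmod (w i))\<^sup>2)"
    using a by (intro summable_add summable_mult) (auto simp: L2_def)
  moreover have "norm ((cmod (v i + w i))\<^sup>2) \<le> 2*(cmod (v i))\<^sup>2 + 2*(cmod (w i))\<^sup>2" for i
    using sq_sum_bound by simp
  ultimately show ?thesis unfolding L2_def vadd_def by (auto intro: summable_comparison_test[of _ "\<lambda>i. 2*(cmod (v i))\<^sup>2 + 2*(cmod (w i))\<^sup>2"])
qed
lemma L2_scale: "v \<in> L2 \<Longrightarrow> vscale c v \<in> L2"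
  unfolding L2_def vscale_def by (simp add: norm_mult power_mult_distrib summable_mult)
lemma L2_sh: "v \<in> L2 \<Longrightarrow> sh v \<in> L2"
  unfolding L2_def sh_def using summable_Suc_iff[of "\<lambda>i. (cmod (v i))\<^sup>2"] by simp

lemma prod_summable: assumes "v \<in> L2" "w \<in> L2" shows "summable (\<lambda>i. cmod (v i) * cmod (w i))"
proof -
  have s: "summable (\<lambda>i. (cmod (v i))\<^sup>2 + (cmod (w i))\<^sup>2)" using assms by (intro summable_add) (auto simp: L2_def)
  have b: "norm (cmod (v i) * cmod (w i)) \<le> (cmod (v i))\<^sup>2 + (cmod (w i))\<^sup>2" for i
  proof -
    have "0 \<le> (cmod (v i) - cmod (w i))\<^sup>2" by simp
    hence "2 * cmod (v i) * cmod (w i) \<le> (cmod (v i))\<^sup>2 + (cmod (w i))\<^sup>2" unfolding power2_diff by simp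
    moreover have "0 \<le> cmod (v i) * cmod (w i)" by simp
    ultimately have "cmod (v i) * cmod (w i) \<le> (cmod (v i))\<^sup>2 + (cmod (w i))\<^sup>2" by linarith
    thus ?thesis by simp
  qed
  show ?thesis by (rule summable_comparison_test[OF _ s]) (use b in blast)
qed
lemma ip_summable_norm: assumes "v \<in> L2" "w \<in> L2" shows "summable (\<lambda>i. norm (v i * cnj (w i)))"
  using prod_summable[OF assms] by (simp add: norm_mult)
lemma ip_summable: assumes "v \<in> L2" "w \<in> L2" shows "summable (\<lambda>i. v i * cnj (w i))"
  using ip_summable_norm[OF assms] by (rule summable_norm_cancel)
lemma nrm2_nonneg: "v \<in> L2 \<Longrightarrow> 0 \<le> nrm2 v" unfolding nrm2_def L2_def by (simp add: suminf_nonneg)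

lemma ip_add1: assumes "v \<in> L2" "w \<in> L2" "u \<in> L2" shows "ip (vadd v w) u = ip v u + ip w u"
  unfolding ip_def vadd_def using suminf_add[OF ip_summable[OF assms(1,3)] ip_summable[OF assms(2,3)]]
  by (simp add: distrib_right)
lemma ip_scale1: assumes "v \<in> L2" "u \<in> L2" shows "ip (vscale c v) u = c * ip v u"
  unfolding ip_def vscale_def using suminf_mult[OF ip_summable[OF assms], of c]
  by (simp add: mult.assoc)
lemma ip_cnj: assumes "v \<in> L2" "w \<in> L2" shows "ip w v = cnj (ip v w)"
  unfolding ip_def using bounded_linear.suminf[OF bounded_linear_cnj ip_summable[OF assms]]
  by (simp add: mult.commute)
lemma ip_self: assumes "v \<in> L2" shows "ip v v = complex_of_real (nrm2 v)"
proof -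
  have e: "\<And>i. v i * cnj (v i) = complex_of_real ((cmod (v i))\<^sup>2)" by (metis complex_norm_square)
  have "(\<lambda>i. (cmod (v i))\<^sup>2) sums nrm2 v" unfolding nrm2_def using assms by (simp add: L2_def summable_sums)
  hence "(\<lambda>i. complex_of_real ((cmod (v i))\<^sup>2)) sums complex_of_real (nrm2 v)" by (rule sums_of_real)
  thus ?thesis unfolding ip_def by (simp only: e sums_unique[symmetric])
qed
lemma ip_CS: assumes "v \<in> L2" "w \<in> L2" shows "cmod (ip v w) \<le> sqrt (nrm2 v) * sqrt (nrm2 w)"
proof -
  have "cmod (ip v w) \<le> (\<Sum>i. norm (v i * cnj (w i)))" unfolding ip_def by (rule summable_norm[OF ip_summable_norm[OF assms]])
  also have "\<dots> = (\<Sum>i. cmod (v i) * cmod (w i))" by (simp add: norm_mult)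
  also have "\<dots> \<le> sqrt (nrm2 v) * sqrt (nrm2 w)"
  proof (rule suminf_le_const[OF prod_summable[OF assms]])
    fix n
    have "(\<Sum>i<n. cmod (v i) * cmod (w i)) = (\<Sum>i<n. \<bar>cmod (v i)\<bar> * \<bar>cmod (w i)\<bar>)" by simp
    also have "\<dots> \<le> L2_set (\<lambda>i. cmod (v i)) {..<n} * L2_set (\<lambda>i. cmod (w i)) {..<n}" by (rule L2_set_mult_ineq)
    also have "\<dots> \<le> sqrt (nrm2 v) * sqrt (nrm2 w)"
    proof (rule mult_mono)
      have "(\<Sum>i<n. (cmod (v i))\<^sup>2) \<le> nrm2 v" unfolding nrm2_def
        using assms by (intro sum_le_suminf) (auto simp: L2_def)
      thus "L2_set (\<lambda>i. cmod (v i)) {..<n} \<le> sqrt (nrm2 v)" unfolding L2_set_def by simp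
      have "(\<Sum>i<n. (cmod (w i))\<^sup>2) \<le> nrm2 w" unfolding nrm2_def
        using assms by (intro sum_le_suminf) (auto simp: L2_def)
      thus "L2_set (\<lambda>i. cmod (w i)) {..<n} \<le> sqrt (nrm2 w)" unfolding L2_set_def by simp
    qed (auto simp: nrm2_nonneg assms L2_set_nonneg)
    finally show "(\<Sum>i<n. cmod (v i) * cmod (w i)) \<le> sqrt (nrm2 v) * sqrt (nrm2 w)" .
  qed
  finally show ?thesis .
qed

lemma nrm2_split: "v \<in> L2 \<Longrightarrow> nrm2 v = (cmod (v 0))\<^sup>2 + nrm2 (sh v)"
  unfolding nrm2_def sh_def L2_def using suminf_split_head[of "\<lambda>i. (cmod (v i))\<^sup>2"] by simp
lemma nrm2_zero: assumes "v \<in> L2" "nrm2 v = 0" shows "v = vzero"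
proof -
  have "\<forall>i. (cmod (v i))\<^sup>2 = 0" using assms suminf_eq_zero_iff[of "\<lambda>i. (cmod (v i))\<^sup>2"]
    by (simp add: L2_def nrm2_def)
  thus ?thesis by (auto simp: vzero_def)
qed
lemma nrm2_scale: "v \<in> L2 \<Longrightarrow> nrm2 (vscale c v) = (cmod c)\<^sup>2 * nrm2 v"
  unfolding nrm2_def vscale_def L2_def by (simp add: norm_mult power_mult_distrib suminf_mult)
lemma nrm2_add_le: assumes "v \<in> L2" "w \<in> L2" shows "nrm2 (vadd v w) \<le> 2 * nrm2 v + 2 * nrm2 w"
proof -
  have "nrm2 (vadd v w) \<le> (\<Sum>i. 2*(cmod (v i))\<^sup>2 + 2*(cmod (w i))\<^sup>2)" unfolding nrm2_def vadd_def
    apply (rule suminf_le[OF sq_sum_bound])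
    using L2_add[OF assms] assms by (auto simp: L2_def vadd_def intro!: summable_add summable_mult)
  also have "\<dots> = 2 * nrm2 v + 2 * nrm2 w"
  proof -
    have s1: "summable (\<lambda>i. 2*(cmod (v i))\<^sup>2)" and s2: "summable (\<lambda>i. 2*(cmod (w i))\<^sup>2)"
      using assms by (auto simp: L2_def intro!: summable_mult)
    show ?thesis unfolding nrm2_def suminf_add[OF s1 s2, symmetric] using assms
      by (simp add: L2_def suminf_mult)
  qed
  finally show ?thesis .
qed
lemma l2dist_nrm2: "l2dist v w = sqrt (nrm2 (vadd v (vscale (-1) w)))"
  unfolding l2dist_def nrm2_def vadd_def vscale_def by simp

lemma Bf_ip: "Bf v w = v 0 * cnj (w 0) - ip (sh v) (sh w)"
  unfolding Bf_def ip_def sh_def by simp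
lemma sh_vadd: "sh (vadd v w) = vadd (sh v) (sh w)" by (simp add: sh_def vadd_def)
lemma sh_vscale: "sh (vscale c v) = vscale c (sh v)" by (simp add: sh_def vscale_def)

lemma B_add1: assumes "v \<in> L2" "w \<in> L2" "u \<in> L2" shows "Bf (vadd v w) u = Bf v u + Bf w u"
  unfolding Bf_ip sh_vadd using ip_add1[OF L2_sh[OF assms(1)] L2_sh[OF assms(2)] L2_sh[OF assms(3)]]
  by (simp add: vadd_def algebra_simps)
lemma B_scale1: assumes "v \<in> L2" "u \<in> L2" shows "Bf (vscale c v) u = c * Bf v u"
  unfolding Bf_ip sh_vscale using ip_scale1[OF L2_sh[OF assms(1)] L2_sh[OF assms(2)]]
  by (simp add: vscale_def algebra_simps)
lemma B_cnj: assumes "v \<in> L2" "w \<in> L2" shows "Bf w v = cnj (Bf v w)"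
  unfolding Bf_ip using ip_cnj[OF L2_sh[OF assms(1)] L2_sh[OF assms(2)]] by simp
lemma B_add2: assumes "v \<in> L2" "w \<in> L2" "u \<in> L2" shows "Bf u (vadd v w) = Bf u v + Bf u w"
  using B_add1[OF assms] B_cnj assms L2_add by (metis complex_cnj_add)
lemma B_scale2: assumes "v \<in> L2" "u \<in> L2" shows "Bf u (vscale c v) = cnj c * Bf u v"
  using B_scale1[OF assms, of c] B_cnj assms L2_scale by (metis complex_cnj_mult)
lemma B_self: assumes "v \<in> L2" shows "Bf v v = complex_of_real ((cmod (v 0))\<^sup>2 - nrm2 (sh v))"
proof -
  have "v 0 * cnj (v 0) = complex_of_real ((cmod (v 0))\<^sup>2)" by (metis complex_norm_square)
  thus ?thesis unfolding Bf_ip ip_self[OF L2_sh[OF assms]] by (simp only: of_real_diff)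
qed
lemma B_self_Re: assumes "v \<in> L2" shows "Re (Bf v v) = (cmod (v 0))\<^sup>2 - nrm2 (sh v)"
  using B_self[OF assms] by simp
lemma B_self_real: assumes "v \<in> L2" shows "Bf v v = complex_of_real (Re (Bf v v))"
  using B_self[OF assms] by simp

lemma B_bound: assumes "v \<in> L2" "w \<in> L2" shows "cmod (Bf v w) \<le> 2 * (sqrt (nrm2 v) * sqrt (nrm2 w))"
proof -
  have sv: "sqrt (nrm2 (sh v)) \<le> sqrt (nrm2 v)" "cmod (v 0) \<le> sqrt (nrm2 v)"
    using nrm2_split[OF assms(1)] nrm2_nonneg[OF L2_sh[OF assms(1)]] by (auto intro: real_le_rsqrt)
  have sw: "sqrt (nrm2 (sh w)) \<le> sqrt (nrm2 w)" "cmod (w 0) \<le> sqrt (nrm2 w)"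
    using nrm2_split[OF assms(2)] nrm2_nonneg[OF L2_sh[OF assms(2)]] by (auto intro: real_le_rsqrt)
  have "cmod (Bf v w) \<le> cmod (v 0 * cnj (w 0)) + cmod (ip (sh v) (sh w))" unfolding Bf_ip by (rule norm_triangle_ineq4)
  also have "\<dots> \<le> cmod (v 0) * cmod (w 0) + sqrt (nrm2 (sh v)) * sqrt (nrm2 (sh w))"
    using ip_CS[OF L2_sh[OF assms(1)] L2_sh[OF assms(2)]] by (simp add: norm_mult)
  also have "\<dots> \<le> sqrt (nrm2 v) * sqrt (nrm2 w) + sqrt (nrm2 v) * sqrt (nrm2 w)"
    by (intro add_mono mult_mono sv sw) (auto simp: nrm2_nonneg assms L2_sh)
  finally show ?thesis by simp
qed

lemma lemQ: assumes "u \<in> L2" "w \<in> L2" "Re (Bf u u) > 0" "Bf w u = 0"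
  shows "Re (Bf u u) * nrm2 w \<le> 2 * (cmod (u 0))\<^sup>2 * (- Re (Bf w w))"
proof -
  define a where "a = (cmod (w 0))\<^sup>2"
  define p where "p = nrm2 (sh w)"
  define q where "q = nrm2 (sh u)"
  define U where "U = (cmod (u 0))\<^sup>2"
  define b where "b = Re (Bf u u)"
  have b: "b = U - q" unfolding b_def U_def q_def by (rule B_self_Re[OF assms(1)])
  have bw: "Re (Bf w w) = a - p" unfolding a_def p_def by (rule B_self_Re[OF assms(2)])
  have nw: "nrm2 w = a + p" unfolding a_def p_def by (rule nrm2_split[OF assms(2)])
  have p0: "p \<ge> 0" "q \<ge> 0" "a \<ge> 0" using nrm2_nonneg L2_sh assms unfolding p_def q_def a_def by auto
  have bpos: "b > 0" using assms(3) b_def by simp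
  have e: "w 0 * cnj (u 0) = ip (sh w) (sh u)" using assms(4) unfolding Bf_ip by simp
  have "cmod (w 0 * cnj (u 0)) \<le> sqrt p * sqrt q" unfolding e p_def q_def by (rule ip_CS[OF L2_sh L2_sh]; fact)
  hence "(cmod (w 0 * cnj (u 0)))\<^sup>2 \<le> (sqrt p * sqrt q)\<^sup>2" by (simp add: power_mono)
  hence aU: "a * U \<le> p * q" using p0 by (simp add: a_def U_def norm_mult power_mult_distrib)
  have "U > 0" using b bpos p0 by simp
  have "p * q \<le> p * U" using b bpos p0 by (intro mult_left_mono) auto
  hence "a * U \<le> p * U" using aU by simp
  hence ap: "a \<le> p" using \<open>U > 0\<close> by simp
  have "b * (a + p) \<le> 2 * U * (p - a)"
  proof -
    have "2 * U * (p - a) - b * (a + p) = b * p + 2 * q * p - 2 * U * a - a * b" unfolding b by (simp add: algebra_simps)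
    also have "\<dots> \<ge> b * p - a * b" using aU by (simp add: algebra_simps)
    moreover have "b * p - a * b \<ge> 0" using ap bpos by (simp add: algebra_simps mult_left_mono)
    ultimately show ?thesis by linarith
  qed
  thus ?thesis unfolding nw bw b_def U_def by simp
qed

lemma lemN: assumes "n \<in> L2" "v \<in> L2" "Bf n n = 0" "Re (Bf v v) > 0" "Bf n v = 0"
  shows "n = vzero"
proof -
  have "Re (Bf v v) * nrm2 n \<le> 0" using lemQ[OF assms(2,1,4,5)] assms(3) by simp
  hence "nrm2 n \<le> 0" using assms(4) by (simp add: mult_le_0_iff)
  thus ?thesis using nrm2_nonneg[OF assms(1)] nrm2_zero[OF assms(1)] by simp
qed

definition e0 :: cvec where "e0 = (\<lambda>i. if i = 0 then 1 else 0)"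

lemma Vm_add: "v \<in> Vm m \<Longrightarrow> w \<in> Vm m \<Longrightarrow> vadd v w \<in> Vm m"
  using L2_add[of v w] unfolding Vm_def L2_def by (auto simp: vadd_def)
lemma Vm_scale: "v \<in> Vm m \<Longrightarrow> vscale c v \<in> Vm m"
  using L2_scale[of v c] unfolding Vm_def L2_def by (auto simp: vscale_def)
lemma e0_Vm: "e0 \<in> Vm m"
proof -
  have "summable (\<lambda>i. (cmod (e0 i))\<^sup>2)"
    by (rule summable_finite[of "{0}"]) (auto simp: e0_def)
  moreover have "m < enat i \<Longrightarrow> e0 i = 0" for i by (cases "i = 0") (auto simp: e0_def zero_enat_def[symmetric])
  ultimately show ?thesis unfolding Vm_def by auto
qed

lemma decomp: assumes "v \<in> Vm m"
  shows "\<exists>y c. y \<in> Vm m \<and> Re (Bf y y) > 0 \<and> v = vadd y (vscale (- c) e0)"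
proof -
  have vL: "v \<in> L2" using Vm_L2 assms .
  define c where "c = sqrt (nrm2 (sh v)) + cmod (v 0) + 1"
  define y where "y = vadd v (vscale (complex_of_real c) e0)"
  have yV: "y \<in> Vm m" unfolding y_def by (intro Vm_add Vm_scale assms e0_Vm)
  have shy: "sh y = sh v" by (auto simp: y_def sh_def vadd_def vscale_def e0_def)
  have y0: "y 0 = v 0 + complex_of_real c" by (simp add: y_def vadd_def vscale_def e0_def)
  have P0: "nrm2 (sh v) \<ge> 0" using nrm2_nonneg[OF L2_sh[OF vL]] .
  have "c \<ge> 0" unfolding c_def using P0 by simp
  hence "cmod (complex_of_real c + v 0) \<ge> c - cmod (v 0)"
    using norm_diff_ineq[of "complex_of_real c" "v 0"] by simp
  hence "cmod (y 0) \<ge> c - cmod (v 0)" unfolding y0 by (simp add: add.commute)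
  hence "cmod (y 0) \<ge> sqrt (nrm2 (sh v)) + 1" unfolding c_def by simp
  moreover have "sqrt (nrm2 (sh v)) \<ge> 0" using P0 by simp
  ultimately have "(cmod (y 0))\<^sup>2 > (sqrt (nrm2 (sh v)))\<^sup>2"
    by (smt (verit) power_strict_mono zero_less_numeral)
  hence "Re (Bf y y) > 0" using B_self_Re[OF Vm_L2[OF yV]] shy nrm2_nonneg[OF L2_sh[OF vL]] by simp
  moreover have "v = vadd y (vscale (- complex_of_real c) e0)"
    by (auto simp: y_def vadd_def vscale_def)
  ultimately show ?thesis using yV by blast
qed

definition linB :: "enat \<Rightarrow> (cvec \<Rightarrow> cvec) \<Rightarrow> bool" where
  "linB m A \<longleftrightarrow> (\<forall>v\<in>Vm m. A v \<in> Vm m)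
      \<and> (\<forall>v\<in>Vm m. \<forall>w\<in>Vm m. A (vadd v w) = vadd (A v) (A w))
      \<and> (\<forall>c. \<forall>v\<in>Vm m. A (vscale c v) = vscale c (A v))
      \<and> (\<forall>v\<in>Vm m. \<forall>w\<in>Vm m. Bf (A v) (A w) = Bf v w)"

lemma Ugrp_linB: "A \<in> Ugrp m \<Longrightarrow> linB m A"
  unfolding Ugrp_def linB_def bij_betw_def by auto

lemma linB_comp: "linB m A \<Longrightarrow> linB m B \<Longrightarrow> linB m (A \<circ> B)"
  unfolding linB_def by (simp add: Vm_add Vm_scale)

lemma cline_image: assumes "\<forall>c. A (vscale c v) = vscale c (A v)" shows "A ` cline v = cline (A v)"
  using assms unfolding cline_def by (auto simp: image_iff)

lemma in_cline: "v \<in> cline v" unfolding cline_def by (auto simp: image_iff vscale_def intro: exI[of _ 1])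

lemma linB_cline: "linB m A \<Longrightarrow> v \<in> Vm m \<Longrightarrow> A ` cline v = cline (A v)"
  by (rule cline_image) (auto simp: linB_def)

lemma uniq: assumes C: "linB m C" and D: "linB m D" and nV: "n \<in> Vm m" and nz: "n \<noteq> vzero"
  and nn: "Bf n n = 0" and CD: "\<forall>p\<in>hyp m. C ` p = D ` p"
  and Cn: "C n = vscale (complex_of_real r) n" and Dn: "D n = vscale (complex_of_real s) n"
  and r: "r > 0" and s: "s > 0"
  shows "\<forall>v\<in>Vm m. C v = D v"
proof -
  have tl: "C v = D v" if vV: "v \<in> Vm m" and vt: "Re (Bf v v) > 0" for v
  proof -
    have "cline v \<in> hyp m" using vV vt unfolding hyp_def by auto
    hence "C ` cline v = D ` cline v" using CD by auto
    hence "C v \<in> D ` cline v" using in_cline by blast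
    then obtain \<alpha> where a: "C v = D (vscale \<alpha> v)" unfolding cline_def by auto
    hence a: "C v = vscale \<alpha> (D v)" using D vV unfolding linB_def by auto
    have L: "v \<in> L2" "n \<in> L2" "D v \<in> L2" using vV nV D Vm_L2 unfolding linB_def by auto
    have "Bf v n \<noteq> 0"
    proof
      assume "Bf v n = 0"
      hence "Bf n v = 0" using B_cnj[OF L(1,2)] by simp
      thus False using lemN[OF L(2) L(1) nn vt] nz by simp
    qed
    have "Bf (C v) (C n) = Bf v n" using C vV nV unfolding linB_def by auto
    moreover have "Bf (vscale \<alpha> (D v)) (vscale (complex_of_real r) n) = \<alpha> * Bf (D v) (vscale (complex_of_real r) n)"
      by (rule B_scale1[OF L(3) L2_scale[OF L(2)]])
    moreover have "Bf (D v) (vscale (complex_of_real r) n) = complex_of_real r * Bf (D v) n"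
      using B_scale2[OF L(2) L(3), of "complex_of_real r"] by simp
    ultimately have e1: "\<alpha> * r * Bf (D v) n = Bf v n" unfolding a Cn by (simp add: mult.assoc)
    have "Bf (D v) (D n) = Bf v n" using D vV nV unfolding linB_def by auto
    hence e2: "s * Bf (D v) n = Bf v n" unfolding Dn using B_scale2[OF L(2) L(3)] by simp
    have "Bf (D v) n \<noteq> 0" using e2 \<open>Bf v n \<noteq> 0\<close> by auto
    hence "\<alpha> * r = s" using e1 e2 by (metis mult_cancel_right)
    hence al: "\<alpha> = complex_of_real (s / r)" using r by (simp add: field_simps)
    have "Bf (C v) (C v) = Bf v v" using C vV unfolding linB_def by auto
    moreover have "Bf (D v) (D v) = Bf v v" using D vV unfolding linB_def by auto
    ultimately have "\<alpha> * cnj \<alpha> * Bf v v = Bf v v" unfolding a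
      using B_scale1[OF L(3) L2_scale[OF L(3)]] B_scale2[OF L(3) L(3)] by (simp add: mult.assoc)
    moreover have "Bf v v \<noteq> 0" using vt by auto
    ultimately have "\<alpha> * cnj \<alpha> = 1" by simp
    hence "complex_of_real ((s / r) * (s / r)) = 1" unfolding al by simp
    hence "(s / r) * (s / r) = 1" by (simp only: of_real_eq_1_iff)
    moreover have "s / r > 0" using r s by simp
    ultimately have "(s / r)\<^sup>2 = 1\<^sup>2" "s / r \<ge> 0" using s by (simp_all add: power2_eq_square)
    hence "s / r = 1" using power2_eq_iff_nonneg[of "s / r" 1] by simp
    hence "\<alpha> = 1" using al by simp
    thus ?thesis using a by (simp add: vscale_def)
  qed
  show ?thesis
  proof
    fix v assume vV: "v \<in> Vm m"
    obtain y c where y: "y \<in> Vm m" "Re (Bf y y) > 0" "v = vadd y (vscale (- c) e0)" using decomp[OF vV] by blast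
    have "Re (Bf e0 e0) > 0" using B_self_Re[OF Vm_L2[OF e0_Vm]] by (simp add: e0_def sh_def nrm2_def)
    hence "C e0 = D e0" using tl e0_Vm by blast
    moreover have "C y = D y" using tl y by blast
    moreover have "C (vscale (- c) e0) = vscale (- c) (C e0)" "D (vscale (- c) e0) = vscale (- c) (D e0)"
      using C D e0_Vm[of m] unfolding linB_def by auto
    moreover have "C v = vadd (C y) (C (vscale (- c) e0))" "D v = vadd (D y) (D (vscale (- c) e0))"
      unfolding y(3) using C D y(1) e0_Vm[of m] Vm_scale[OF e0_Vm[of m]] unfolding linB_def by auto
    ultimately show "C v = D v" by simp
  qed
qed

lemma cont_core:
  fixes u :: "'g \<Rightarrow> cvec" and lam :: "'g \<Rightarrow> real" and lam0 \<beta> :: real and k :: complex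
  assumes X: "eventually (\<lambda>g. g \<in> X) F"
    and uL: "\<And>g. g \<in> X \<Longrightarrow> u g \<in> L2" and u0L: "u0 \<in> L2" and nL: "n \<in> L2"
    and bpos: "\<beta> > 0" and b0: "Bf u0 u0 = complex_of_real \<beta>" and bu: "\<And>g. g \<in> X \<Longrightarrow> Bf (u g) (u g) = complex_of_real \<beta>"
    and lam: "\<And>g. g \<in> X \<Longrightarrow> lam g > 0" and lam0: "lam0 > 0"
    and kn: "\<And>g. g \<in> X \<Longrightarrow> Bf (u g) n * lam g = k" and kn0: "Bf u0 n * lam0 = k" and k: "k \<noteq> 0"
    and t: "\<And>e. e > 0 \<Longrightarrow> eventually (\<lambda>g. arcosh (cmod (Bf (u g) u0) / \<beta>) < e) F"
  shows "((\<lambda>g. nrm2 (vadd (u g) (vscale (-1) u0))) \<longlongrightarrow> 0) F"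
proof -
  define c where "c g = Bf (u g) u0 / complex_of_real \<beta>" for g
  define w where "w g = vadd (u g) (vscale (- c g) u0)" for g
  have cm: "cmod (c g) = cmod (Bf (u g) u0) / \<beta>" for g unfolding c_def using bpos by (simp add: norm_divide)
  have wL: "g \<in> X \<Longrightarrow> w g \<in> L2" for g unfolding w_def by (intro L2_add L2_scale uL u0L)
  have wu0: "Bf (w g) u0 = 0" if g: "g \<in> X" for g
  proof -
    have "Bf (w g) u0 = Bf (u g) u0 + (- c g) * Bf u0 u0" unfolding w_def
      using B_add1[OF uL[OF g] L2_scale[OF u0L] u0L] B_scale1[OF u0L u0L] by simp
    thus ?thesis unfolding b0 c_def using bpos by simp
  qed
  have ww: "Re (Bf (w g) (w g)) = \<beta> - (cmod (c g))\<^sup>2 * \<beta>" if g: "g \<in> X" for g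
  proof -
    have "Bf (w g) (w g) = Bf (u g) (w g) + (- c g) * Bf u0 (w g)" unfolding w_def[of g]
      using B_add1[OF uL[OF g] L2_scale[OF u0L] wL[OF g]] B_scale1[OF u0L wL[OF g]] by (simp add: w_def)
    also have "Bf u0 (w g) = 0" using B_cnj[OF wL[OF g] u0L] wu0[OF g] by simp
    also have "Bf (u g) (w g) = Bf (u g) (u g) + cnj (- c g) * Bf (u g) u0" unfolding w_def
      using B_add2[OF uL[OF g] L2_scale[OF u0L] uL[OF g]] B_scale2[OF u0L uL[OF g]] by simp
    also have "Bf (u g) u0 = c g * complex_of_real \<beta>" unfolding c_def using bpos by simp
    finally have "Bf (w g) (w g) = complex_of_real \<beta> - (cnj (c g) * c g) * complex_of_real \<beta>"
      unfolding bu[OF g] by (simp add: algebra_simps)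
    also have "cnj (c g) * c g = complex_of_real ((cmod (c g))\<^sup>2)" by (metis complex_norm_square mult.commute)
    finally show ?thesis by simp
  qed
  define K where "K = 2 * (cmod (u0 0))\<^sup>2"
  have wb: "nrm2 (w g) \<le> K * ((cmod (c g))\<^sup>2 - 1)" if g: "g \<in> X" for g
  proof -
    have "Re (Bf u0 u0) * nrm2 (w g) \<le> 2 * (cmod (u0 0))\<^sup>2 * (- Re (Bf (w g) (w g)))"
      by (rule lemQ[OF u0L wL[OF g]]) (use b0 bpos wu0[OF g] in auto)
    hence "\<beta> * nrm2 (w g) \<le> \<beta> * (K * ((cmod (c g))\<^sup>2 - 1))" unfolding ww[OF g] b0 K_def by (simp add: algebra_simps)
    thus ?thesis using bpos by simp
  qed
  have "\<beta> = (cmod (u0 0))\<^sup>2 - nrm2 (sh u0)" using B_self_Re[OF u0L] b0 by simp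
  hence "(cmod (u0 0))\<^sup>2 > 0" using bpos nrm2_nonneg[OF L2_sh[OF u0L]] by linarith
  hence Kpos: "K > 0" unfolding K_def by linarith
  have c1: "cmod (c g) \<ge> 1" if g: "g \<in> X" for g
  proof (rule ccontr)
    assume "\<not> cmod (c g) \<ge> 1"
    hence "(cmod (c g))\<^sup>2 < 1\<^sup>2" by (intro power_strict_mono) auto
    hence "K * ((cmod (c g))\<^sup>2 - 1) < 0" using Kpos by (simp add: mult_pos_neg)
    thus False using wb[OF g] nrm2_nonneg[OF wL[OF g]] by simp
  qed
  have ach: "((\<lambda>g. arcosh (cmod (c g))) \<longlongrightarrow> 0) F"
  proof (rule tendstoI)
    fix e :: real assume "e > 0"
    show "eventually (\<lambda>g. dist (arcosh (cmod (c g))) 0 < e) F"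
      using X t[OF \<open>e > 0\<close>] by eventually_elim (use c1 cm in auto)
  qed
  have cm1: "((\<lambda>g. cmod (c g)) \<longlongrightarrow> 1) F"
  proof -
    have "((\<lambda>g. cosh (arcosh (cmod (c g)))) \<longlongrightarrow> cosh 0) F" by (intro tendsto_intros ach)
    hence "((\<lambda>g. cosh (arcosh (cmod (c g)))) \<longlongrightarrow> 1) F" by simp
    moreover have "eventually (\<lambda>g. cosh (arcosh (cmod (c g))) = cmod (c g)) F"
      using X by eventually_elim (use c1 in auto)
    ultimately show ?thesis by (rule Lim_transform_eventually)
  qed
  have wlim: "((\<lambda>g. nrm2 (w g)) \<longlongrightarrow> 0) F"
  proof (rule Lim_null_comparison)
    show "eventually (\<lambda>g. norm (nrm2 (w g)) \<le> K * ((cmod (c g))\<^sup>2 - 1)) F"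
      using X by eventually_elim (use wb nrm2_nonneg wL in auto)
    have "((\<lambda>g. K * ((cmod (c g))\<^sup>2 - 1)) \<longlongrightarrow> K * (1\<^sup>2 - 1)) F" by (intro tendsto_intros cm1)
    thus "((\<lambda>g. K * ((cmod (c g))\<^sup>2 - 1)) \<longlongrightarrow> 0) F" by simp
  qed
  have swlim: "((\<lambda>g. sqrt (nrm2 (w g))) \<longlongrightarrow> 0) F" using tendsto_real_sqrt[OF wlim] by simp
  have wn: "((\<lambda>g. Bf (w g) n) \<longlongrightarrow> 0) F"
  proof (rule Lim_null_comparison)
    show "eventually (\<lambda>g. norm (Bf (w g) n) \<le> 2 * (sqrt (nrm2 (w g)) * sqrt (nrm2 n))) F"
      using X by eventually_elim (use B_bound wL nL in auto)
    have "((\<lambda>g. 2 * (sqrt (nrm2 (w g)) * sqrt (nrm2 n))) \<longlongrightarrow> 2 * (0 * sqrt (nrm2 n))) F" by (intro tendsto_intros swlim)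
    thus "((\<lambda>g. 2 * (sqrt (nrm2 (w g)) * sqrt (nrm2 n))) \<longlongrightarrow> 0) F" by simp
  qed
  define r where "r g = lam0 / lam g" for g
  have wn_eq: "Bf (w g) n * (complex_of_real lam0 / k) = complex_of_real (r g) - c g" if g: "g \<in> X" for g
  proof -
    have "Bf (w g) n = Bf (u g) n + (- c g) * Bf u0 n" unfolding w_def
      using B_add1[OF uL[OF g] L2_scale[OF u0L] nL] B_scale1[OF u0L nL] by simp
    also have "Bf (u g) n = k / lam g" using kn[OF g] lam[OF g] by (simp add: field_simps)
    also have "Bf u0 n = k / lam0" using kn0 lam0 by (simp add: field_simps)
    finally show ?thesis unfolding r_def using k lam[OF g] lam0 by (simp add: field_simps)
  qed
  have crlim: "((\<lambda>g. complex_of_real (r g) - c g) \<longlongrightarrow> 0) F"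
  proof -
    have "((\<lambda>g. Bf (w g) n * (complex_of_real lam0 / k)) \<longlongrightarrow> 0 * (complex_of_real lam0 / k)) F"
      by (intro tendsto_intros wn)
    hence "((\<lambda>g. Bf (w g) n * (complex_of_real lam0 / k)) \<longlongrightarrow> 0) F" by simp
    moreover have "eventually (\<lambda>g. Bf (w g) n * (complex_of_real lam0 / k) = complex_of_real (r g) - c g) F" using X by (rule eventually_mono) (rule wn_eq)
    ultimately show ?thesis by (rule Lim_transform_eventually)
  qed
  have d: "((\<lambda>g. cmod (c g) - r g) \<longlongrightarrow> 0) F"
  proof (rule Lim_null_comparison)
    show "eventually (\<lambda>g. norm (cmod (c g) - r g) \<le> cmod (complex_of_real (r g) - c g)) F"
      using X
    proof eventually_elim
      case (elim g)
      have "r g > 0" unfolding r_def using lam[OF elim] lam0 by simp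
      hence "cmod (complex_of_real (r g)) = r g" by simp
      thus ?case using norm_triangle_ineq3[of "c g" "complex_of_real (r g)"] by (simp add: norm_minus_commute)
    qed
    show "((\<lambda>g. cmod (complex_of_real (r g) - c g)) \<longlongrightarrow> 0) F" using tendsto_norm_zero[OF crlim] .
  qed
  have rlim: "(r \<longlongrightarrow> 1) F"
  proof -
    have "((\<lambda>g. cmod (c g) - (cmod (c g) - r g)) \<longlongrightarrow> 1 - 0) F" by (intro tendsto_intros cm1 d)
    thus ?thesis by simp
  qed
  have clim: "(c \<longlongrightarrow> 1) F"
  proof -
    have "((\<lambda>g. complex_of_real (r g) - (complex_of_real (r g) - c g)) \<longlongrightarrow> complex_of_real 1 - 0) F"
      by (intro tendsto_intros rlim crlim)
    thus ?thesis by simp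
  qed
  show ?thesis
  proof (rule Lim_null_comparison)
    show "eventually (\<lambda>g. norm (nrm2 (vadd (u g) (vscale (-1) u0))) \<le> 2 * nrm2 (w g) + 2 * ((cmod (c g - 1))\<^sup>2 * nrm2 u0)) F"
      using X
    proof eventually_elim
      case (elim g)
      have e: "vadd (u g) (vscale (-1) u0) = vadd (w g) (vscale (c g - 1) u0)"
        unfolding w_def by (auto simp: vadd_def vscale_def algebra_simps)
      have "nrm2 (vadd (w g) (vscale (c g - 1) u0)) \<le> 2 * nrm2 (w g) + 2 * nrm2 (vscale (c g - 1) u0)"
        by (rule nrm2_add_le[OF wL[OF elim] L2_scale[OF u0L]])
      moreover have "nrm2 (vadd (u g) (vscale (-1) u0)) \<ge> 0" by (intro nrm2_nonneg L2_add L2_scale uL elim u0L)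
      ultimately show ?case unfolding e nrm2_scale[OF u0L] by simp
    qed
    have "((\<lambda>g. 2 * nrm2 (w g) + 2 * ((cmod (c g - 1))\<^sup>2 * nrm2 u0)) \<longlongrightarrow> 2 * 0 + 2 * ((cmod (1 - 1))\<^sup>2 * nrm2 u0)) F"
      by (intro tendsto_intros wlim clim)
    thus "((\<lambda>g. 2 * nrm2 (w g) + 2 * ((cmod (c g - 1))\<^sup>2 * nrm2 u0)) \<longlongrightarrow> 0) F" by simp
  qed
qed

lemma vscale_zero: "vscale 0 v = vzero" by (simp add: vscale_def vzero_def)
lemma vscale_vscale: "vscale a (vscale b v) = vscale (a * b) v" by (simp add: vscale_def mult.assoc)
lemma cline_mem: "x \<in> cline a \<longleftrightarrow> (\<exists>c. x = vscale c a)" unfolding cline_def by auto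
lemma cline_scale: assumes "\<kappa> \<noteq> 0" shows "cline (vscale \<kappa> x) = cline x"
proof
  show "cline (vscale \<kappa> x) \<subseteq> cline x" unfolding cline_def by (auto simp: vscale_vscale)
  show "cline x \<subseteq> cline (vscale \<kappa> x)"
  proof
    fix z assume "z \<in> cline x"
    then obtain c where "z = vscale c x" by (auto simp: cline_mem)
    hence "z = vscale (c / \<kappa>) (vscale \<kappa> x)" using assms by (simp add: vscale_vscale)
    thus "z \<in> cline (vscale \<kappa> x)" by (auto simp: cline_mem)
  qed
qed

lemma some_cline: assumes "a \<noteq> vzero"
  obtains \<alpha> where "\<alpha> \<noteq> 0" "(SOME v. v \<in> cline a \<and> v \<noteq> vzero) = vscale \<alpha> a"
proof -
  have "(SOME v. v \<in> cline a \<and> v \<noteq> vzero) \<in> cline a \<and> (SOME v. v \<in> cline a \<and> v \<noteq> vzero) \<noteq> vzero"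
    by (rule someI[of _ a]) (use assms in_cline in auto)
  then obtain \<alpha> where "(SOME v. v \<in> cline a \<and> v \<noteq> vzero) = vscale \<alpha> a" "vscale \<alpha> a \<noteq> vzero"
    by (auto simp: cline_mem)
  moreover have "\<alpha> \<noteq> 0" using calculation(2) vscale_zero by auto
  ultimately show ?thesis using that by blast
qed

lemma hdist_cline: assumes "a \<in> L2" "b \<in> L2" "a \<noteq> vzero" "b \<noteq> vzero"
  shows "hdist (cline a) (cline b) = arcosh (cmod (Bf a b) / sqrt (Re (Bf a a) * Re (Bf b b)))"
proof -
  obtain \<alpha> where a: "\<alpha> \<noteq> 0" "(SOME v. v \<in> cline a \<and> v \<noteq> vzero) = vscale \<alpha> a" using some_cline[OF assms(3)] by blast
  obtain \<gamma> where b: "\<gamma> \<noteq> 0" "(SOME v. v \<in> cline b \<and> v \<noteq> vzero) = vscale \<gamma> b" using some_cline[OF assms(4)] by blast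
  have sc: "Bf (vscale x u) (vscale y v) = x * cnj y * Bf u v" if "u \<in> L2" "v \<in> L2" for x y u v
    using B_scale1[OF that(1) L2_scale[OF that(2)]] B_scale2[OF that(2,1)] by simp
  have n: "cmod (\<alpha> * cnj \<gamma> * Bf a b) = (cmod \<alpha> * cmod \<gamma>) * cmod (Bf a b)" by (simp add: norm_mult)
  have ea: "\<alpha> * cnj \<alpha> = complex_of_real ((cmod \<alpha>)\<^sup>2)" by (metis complex_norm_square)
  have eb: "\<gamma> * cnj \<gamma> = complex_of_real ((cmod \<gamma>)\<^sup>2)" by (metis complex_norm_square)
  have ra: "Re (\<alpha> * cnj \<alpha> * Bf a a) = (cmod \<alpha>)\<^sup>2 * Re (Bf a a)"
    unfolding ea by (simp del: of_real_power)
  have rb: "Re (\<gamma> * cnj \<gamma> * Bf b b) = (cmod \<gamma>)\<^sup>2 * Re (Bf b b)"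
    unfolding eb by (simp del: of_real_power)
  have "sqrt ((cmod \<alpha>)\<^sup>2 * Re (Bf a a) * ((cmod \<gamma>)\<^sup>2 * Re (Bf b b))) = (cmod \<alpha> * cmod \<gamma>) * sqrt (Re (Bf a a) * Re (Bf b b))"
  proof -
    have "(cmod \<alpha>)\<^sup>2 * Re (Bf a a) * ((cmod \<gamma>)\<^sup>2 * Re (Bf b b)) = (cmod \<alpha> * cmod \<gamma>)\<^sup>2 * (Re (Bf a a) * Re (Bf b b))"
      by (simp add: power_mult_distrib algebra_simps)
    thus ?thesis by (simp add: real_sqrt_mult)
  qed
  moreover have "cmod \<alpha> * cmod \<gamma> > 0" using a b by simp
  ultimately show ?thesis unfolding hdist_def Let_def a b sc[OF assms(1,2)] sc[OF assms(1,1)] sc[OF assms(2,2)] n ra rb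
    using a(1) b(1) by simp
qed

lemma vscale_one: "vscale 1 v = v" by (simp add: vscale_def)
lemma vscale_vadd: "vscale k (vadd v w) = vadd (vscale k v) (vscale k w)" by (simp add: vscale_def vadd_def algebra_simps)
lemma B_scale_both: assumes "u \<in> L2" "v \<in> L2" shows "Bf (vscale x u) (vscale y v) = x * cnj y * Bf u v"
  using B_scale1[OF assms(1) L2_scale[OF assms(2)]] B_scale2[OF assms(2,1)] by simp
lemma vzero_Vm: "vzero \<in> Vm m" unfolding Vm_def vzero_def by simp

theorem mainTheorem7:
  fixes G :: "('g, 'b) monoid_scheme" and T :: "'g topology" and m :: enat
    and \<rho> :: "'g \<Rightarrow> cvec set \<Rightarrow> cvec set"
  assumes "topological_group G T"
    and "is_rep G T m \<rho>"
    and "\<exists>x\<in>hyp m. total m {\<rho> g x | g. g \<in> carrier G}"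
    and "\<exists>\<xi>\<in>bdry m. \<forall>g\<in>carrier G. \<rho> g \<xi> = \<xi>"
  shows "\<exists>\<rho>'. is_lift G T m \<rho> \<rho>'"
proof -
  have grp: "group G" and top: "topspace T = carrier G" using assms(1) unfolding topological_group_def by (simp_all only: simp_thms)
  have Rc: "(\<forall>g\<in>carrier G. \<rho> g \<in> PUgrp m)
   \<and> (\<forall>g\<in>carrier G. \<forall>h\<in>carrier G. \<forall>p\<in>hyp m \<union> bdry m. \<rho> (g \<otimes>\<^bsub>G\<^esub> h) p = \<rho> g (\<rho> h p))
   \<and> (\<forall>p\<in>hyp m. \<forall>g0\<in>carrier G. \<forall>e>0. \<exists>U. openin T U \<and> g0 \<in> U \<and>
        (\<forall>g\<in>U. hdist (\<rho> g p) (\<rho> g0 p) < e))" using assms(2) unfolding is_rep_def .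
  note R1 = conjunct1[OF Rc] and R2 = conjunct1[OF conjunct2[OF Rc]] and R3 = conjunct2[OF conjunct2[OF Rc]]
  obtain \<xi> where \<xi>: "\<xi> \<in> bdry m" "\<forall>g\<in>carrier G. \<rho> g \<xi> = \<xi>" using assms(4) by blast
  obtain n where n: "\<xi> = cline n" "n \<in> Vm m" "n \<noteq> vzero" "Bf n n = 0" using \<xi>(1) unfolding bdry_def by blast
  have nL: "n \<in> L2" using n(2) Vm_L2 by blast
  define good where "good g C \<longleftrightarrow> C \<in> Ugrp m \<and> (\<forall>p\<in>hyp m \<union> bdry m. C ` p = \<rho> g p)
      \<and> (\<exists>r>0. C n = vscale (complex_of_real r) n)" for g C
  have ex: "\<exists>C. good g C" if g: "g \<in> carrier G" for g
  proof -
    obtain A where A: "A \<in> Ugrp m" "\<forall>p\<in>hyp m \<union> bdry m. \<rho> g p = A ` p" using R1 g unfolding PUgrp_def by blast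
    have AL: "linB m A" using Ugrp_linB[OF A(1)] .
    have "A ` cline n = cline n" using A(2) \<xi> g n(1) by auto
    hence "A n \<in> cline n" using in_cline by blast
    then obtain \<mu> where mu: "A n = vscale \<mu> n" by (auto simp: cline_mem)
    have "\<mu> \<noteq> 0"
    proof
      assume "\<mu> = 0"
      hence "A n = vzero" using mu vscale_zero by simp
      moreover have "A vzero = vzero"
        using AL n(2) vscale_zero[of n] vscale_zero[of "A n"] unfolding linB_def by metis
      moreover have "inj_on A (Vm m)" using A(1) unfolding Ugrp_def bij_betw_def by auto
      ultimately have "n = vzero" using n(2) vzero_Vm[of m] unfolding inj_on_def by metis
      thus False using n(3) by simp
    qed
    define \<kappa> where "\<kappa> = complex_of_real (cmod \<mu>) / \<mu>"
    have k1: "cmod \<kappa> = 1" unfolding \<kappa>_def using \<open>\<mu> \<noteq> 0\<close> by (simp add: norm_divide)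
    hence k0: "\<kappa> \<noteq> 0" by auto
    have kk: "\<kappa> * cnj \<kappa> = 1" using k1 by (metis complex_norm_square of_real_1 power_one)
    define C where "C = (\<lambda>v. vscale \<kappa> (A v))"
    have bs: "bij_betw (vscale \<kappa>) (Vm m) (Vm m)"
      by (rule bij_betw_byWitness[where f'="vscale (1/\<kappa>)"]) (use k0 in \<open>auto simp: vscale_vscale vscale_one Vm_scale\<close>)
    have "bij_betw A (Vm m) (Vm m)" using A(1) unfolding Ugrp_def by auto
    hence "bij_betw (vscale \<kappa> \<circ> A) (Vm m) (Vm m)" using bs by (rule bij_betw_trans)
    hence bC: "bij_betw C (Vm m) (Vm m)" unfolding C_def comp_def .
    have CU: "C \<in> Ugrp m" unfolding Ugrp_def
    proof (intro CollectI conjI ballI allI bC)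
      fix v w assume "v \<in> Vm m" "w \<in> Vm m"
      thus "C (vadd v w) = vadd (C v) (C w)" using AL unfolding C_def linB_def by (simp add: vscale_vadd)
      have "A v \<in> Vm m" "A w \<in> Vm m" "Bf (A v) (A w) = Bf v w" using AL \<open>v \<in> Vm m\<close> \<open>w \<in> Vm m\<close> unfolding linB_def by auto
      hence "A v \<in> L2" "A w \<in> L2" "Bf (A v) (A w) = Bf v w" using Vm_L2 by auto
      hence "Bf (vscale \<kappa> (A v)) (vscale \<kappa> (A w)) = \<kappa> * cnj \<kappa> * Bf v w" using B_scale_both by simp
      thus "Bf (C v) (C w) = Bf v w" unfolding C_def kk by simp
    next
      fix c v assume "v \<in> Vm m"
      thus "C (vscale c v) = vscale c (C v)" using AL unfolding C_def linB_def by (simp add: vscale_vscale mult.commute)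
    qed
    have CL: "linB m C" using Ugrp_linB[OF CU] .
    have Cim: "\<forall>p\<in>hyp m \<union> bdry m. C ` p = \<rho> g p"
    proof
      fix p assume p: "p \<in> hyp m \<union> bdry m"
      then obtain v where v: "p = cline v" "v \<in> Vm m" unfolding hyp_def bdry_def by blast
      have "C ` p = cline (C v)" using linB_cline[OF CL v(2)] v(1) by simp
      also have "\<dots> = cline (A v)" unfolding C_def using cline_scale[OF k0] by simp
      also have "\<dots> = A ` p" using linB_cline[OF AL v(2)] v(1) by simp
      finally show "C ` p = \<rho> g p" using A(2) p by simp
    qed
    have "C n = vscale (complex_of_real (cmod \<mu>)) n" unfolding C_def mu vscale_vscale \<kappa>_def using \<open>\<mu> \<noteq> 0\<close> by simp
    moreover have "cmod \<mu> > 0" using \<open>\<mu> \<noteq> 0\<close> by simp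
    ultimately show ?thesis unfolding good_def using CU Cim by blast
  qed
  define \<rho>' where "\<rho>' g = (SOME C. good g C)" for g
  have gd: "good g (\<rho>' g)" if "g \<in> carrier G" for g unfolding \<rho>'_def using ex[OF that] by (rule someI_ex)
  have rU: "\<rho>' g \<in> Ugrp m" if "g \<in> carrier G" for g using gd[OF that] unfolding good_def by blast
  have rL: "linB m (\<rho>' g)" if "g \<in> carrier G" for g using Ugrp_linB[OF rU[OF that]] .
  have rim: "\<forall>p\<in>hyp m \<union> bdry m. \<rho>' g ` p = \<rho> g p" if "g \<in> carrier G" for g using gd[OF that] unfolding good_def by blast
  define lam where "lam g = (SOME r. r > 0 \<and> \<rho>' g n = vscale (complex_of_real r) n)" for g
  have lam: "lam g > 0 \<and> \<rho>' g n = vscale (complex_of_real (lam g)) n" if "g \<in> carrier G" for g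
  proof -
    have "\<exists>r. r > 0 \<and> \<rho>' g n = vscale (complex_of_real r) n" using gd[OF that] unfolding good_def by blast
    thus ?thesis unfolding lam_def by (rule someI_ex)
  qed
  have lam1: "lam g > 0" if "g \<in> carrier G" for g using lam[OF that] by blast
  have Gm: "g \<otimes>\<^bsub>G\<^esub> h \<in> carrier G" if "g \<in> carrier G" "h \<in> carrier G" for g h
    using monoid.m_closed[OF group.is_monoid[OF grp] that] .
  have e0t: "Re (Bf e0 e0) > 0" using B_self_Re[OF Vm_L2[OF e0_Vm]] by (simp add: e0_def sh_def nrm2_def)
  have hom: "\<forall>v\<in>Vm m. \<rho>' (g \<otimes>\<^bsub>G\<^esub> h) v = \<rho>' g (\<rho>' h v)" if g: "g \<in> carrier G" and h: "h \<in> carrier G" for g h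
  proof -
    have gh: "g \<otimes>\<^bsub>G\<^esub> h \<in> carrier G" using Gm[OF g h] .
    have DL: "linB m (\<rho>' g \<circ> \<rho>' h)" by (rule linB_comp[OF rL[OF g] rL[OF h]])
    have im: "\<forall>p\<in>hyp m. \<rho>' (g \<otimes>\<^bsub>G\<^esub> h) ` p = (\<rho>' g \<circ> \<rho>' h) ` p"
    proof
      fix p assume p: "p \<in> hyp m"
      then obtain v where v: "p = cline v" "v \<in> Vm m" "Re (Bf v v) > 0" unfolding hyp_def by blast
      have hv: "\<rho>' h v \<in> Vm m" "Bf (\<rho>' h v) (\<rho>' h v) = Bf v v" using rL[OF h] v(2) unfolding linB_def by auto
      have hp0: "\<rho> h p = \<rho>' h ` p" using rim[OF h] p by auto
      hence "\<rho> h p = cline (\<rho>' h v)" using linB_cline[OF rL[OF h] v(2)] v(1) by simp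
      hence hp: "\<rho> h p \<in> hyp m" using hv v(3) unfolding hyp_def by auto
      have "\<rho>' (g \<otimes>\<^bsub>G\<^esub> h) ` p = \<rho> (g \<otimes>\<^bsub>G\<^esub> h) p" using rim[OF gh] p by auto
      also have "\<dots> = \<rho> g (\<rho> h p)" using R2 g h p by auto
      also have "\<dots> = \<rho>' g ` (\<rho> h p)" using rim[OF g] hp by auto
      also have "\<dots> = \<rho>' g ` (\<rho>' h ` p)" using hp0 by simp
      finally show "\<rho>' (g \<otimes>\<^bsub>G\<^esub> h) ` p = (\<rho>' g \<circ> \<rho>' h) ` p" by (simp add: image_comp)
    qed
    have "(\<rho>' g \<circ> \<rho>' h) n = \<rho>' g (vscale (complex_of_real (lam h)) n)" using lam[OF h] by simp
    also have "\<dots> = vscale (complex_of_real (lam h)) (\<rho>' g n)" using rL[OF g] n(2) unfolding linB_def by auto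
    also have "\<dots> = vscale (complex_of_real (lam h * lam g)) n" using lam[OF g] by (simp add: vscale_vscale)
    finally have Dn: "(\<rho>' g \<circ> \<rho>' h) n = vscale (complex_of_real (lam h * lam g)) n" .
    have "\<forall>v\<in>Vm m. \<rho>' (g \<otimes>\<^bsub>G\<^esub> h) v = (\<rho>' g \<circ> \<rho>' h) v"
      by (rule uniq[OF rL[OF gh] DL n(2) n(3) n(4) im conjunct2[OF lam[OF gh]] Dn conjunct1[OF lam[OF gh]]])
         (use lam[OF g] lam[OF h] in simp)
    thus ?thesis by simp
  qed
  have ct: "((\<lambda>g. nrm2 (vadd (\<rho>' g y) (vscale (-1) (\<rho>' g0 y)))) \<longlongrightarrow> 0) (nhdsin T g0)"
    if g0: "g0 \<in> carrier G" and y: "y \<in> Vm m" "Re (Bf y y) > 0" for g0 y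
  proof -
    have yL: "y \<in> L2" using Vm_L2 y(1) .
    have X: "eventually (\<lambda>g. g \<in> carrier G) (nhdsin T g0)"
      unfolding eventually_nhdsin using top by (auto intro!: exI[of _ "topspace T"])
    have uV: "\<rho>' g y \<in> Vm m" "Bf (\<rho>' g y) (\<rho>' g y) = Bf y y" if "g \<in> carrier G" for g
      using rL[OF that] y(1) unfolding linB_def by auto
    have by0: "Bf y y = complex_of_real (Re (Bf y y))" by (rule B_self_real[OF yL])
    have kn: "Bf (\<rho>' g y) n * lam g = Bf y n" if g: "g \<in> carrier G" for g
    proof -
      have "Bf (\<rho>' g y) (\<rho>' g n) = Bf y n" using rL[OF g] y(1) n(2) unfolding linB_def by auto
      moreover have "Bf (\<rho>' g y) (\<rho>' g n) = cnj (complex_of_real (lam g)) * Bf (\<rho>' g y) n"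
        using lam[OF g] B_scale2[OF nL Vm_L2[OF uV(1)[OF g]]] by simp
      ultimately show ?thesis by (simp add: mult.commute)
    qed
    have k: "Bf y n \<noteq> 0"
    proof
      assume "Bf y n = 0"
      hence "Bf n y = 0" using B_cnj[OF yL nL] by simp
      thus False using lemN[OF nL yL n(4) y(2)] n(3) by simp
    qed
    have Bz: "Bf vzero vzero = 0" by (simp add: Bf_def vzero_def)
    have t: "eventually (\<lambda>g. arcosh (cmod (Bf (\<rho>' g y) (\<rho>' g0 y)) / Re (Bf y y)) < e) (nhdsin T g0)"
      if e: "e > 0" for e
    proof -
      have p: "cline y \<in> hyp m" using y unfolding hyp_def by auto
      obtain U where U: "openin T U" "g0 \<in> U" "\<forall>g\<in>U. hdist (\<rho> g (cline y)) (\<rho> g0 (cline y)) < e"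
        using R3 p g0 e by blast
      have "\<forall>g\<in>U. arcosh (cmod (Bf (\<rho>' g y) (\<rho>' g0 y)) / Re (Bf y y)) < e"
      proof
        fix g assume gU: "g \<in> U"
        hence g: "g \<in> carrier G" using openin_subset[OF U(1)] top by auto
        have cl: "\<rho> k (cline y) = cline (\<rho>' k y)" if "k \<in> carrier G" for k
          using rim[OF that] p linB_cline[OF rL[OF that] y(1)] by auto
        have nz: "\<rho>' k y \<noteq> vzero" if "k \<in> carrier G" for k
          using uV(2)[OF that] y(2) Bz by auto
        have "hdist (\<rho> g (cline y)) (\<rho> g0 (cline y)) = arcosh (cmod (Bf (\<rho>' g y) (\<rho>' g0 y)) / sqrt (Re (Bf y y) * Re (Bf y y)))"
          unfolding cl[OF g] cl[OF g0] using hdist_cline[OF Vm_L2[OF uV(1)[OF g]] Vm_L2[OF uV(1)[OF g0]] nz[OF g] nz[OF g0]]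
            uV(2)[OF g] uV(2)[OF g0] by simp
        also have "sqrt (Re (Bf y y) * Re (Bf y y)) = Re (Bf y y)" using y(2) by (simp add: real_sqrt_mult_self)
        finally show "arcosh (cmod (Bf (\<rho>' g y) (\<rho>' g0 y)) / Re (Bf y y)) < e" using bspec[OF U(3) gU] by simp
      qed
      thus ?thesis unfolding eventually_nhdsin using U by blast
    qed
    show ?thesis
      by (rule cont_core[OF X _ Vm_L2[OF uV(1)[OF g0]] nL y(2) _ _ _ _ _ _ k t])
        (use uV Vm_L2 by0 lam1 kn g0 in auto)
  qed
  have cont: "\<forall>v\<in>Vm m. \<forall>g0\<in>carrier G. \<forall>e>0. \<exists>U. openin T U \<and> g0 \<in> U \<and> (\<forall>g\<in>U. l2dist (\<rho>' g v) (\<rho>' g0 v) < e)"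
  proof (intro ballI allI impI)
    fix v g0 and e :: real assume v: "v \<in> Vm m" and g0: "g0 \<in> carrier G" and e: "e > 0"
    obtain y c where y: "y \<in> Vm m" "Re (Bf y y) > 0" "v = vadd y (vscale (- c) e0)" using decomp[OF v] by blast
    define dY where "dY g = vadd (\<rho>' g y) (vscale (-1) (\<rho>' g0 y))" for g
    define dE where "dE g = vadd (\<rho>' g e0) (vscale (-1) (\<rho>' g0 e0))" for g
    have lY: "((\<lambda>g. nrm2 (dY g)) \<longlongrightarrow> 0) (nhdsin T g0)" using ct[OF g0 y(1,2)] unfolding dY_def .
    have lE: "((\<lambda>g. nrm2 (dE g)) \<longlongrightarrow> 0) (nhdsin T g0)" using ct[OF g0 e0_Vm e0t] unfolding dE_def .
    have X: "eventually (\<lambda>g. g \<in> carrier G) (nhdsin T g0)"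
      unfolding eventually_nhdsin using top by (auto intro!: exI[of _ "topspace T"])
    have rv: "\<rho>' g v = vadd (\<rho>' g y) (vscale (- c) (\<rho>' g e0))" if g: "g \<in> carrier G" for g
      using rL[OF g] y(1) e0_Vm[of m] Vm_scale[OF e0_Vm[of m]] unfolding linB_def y(3) by auto
    have dV: "dY g \<in> Vm m" "dE g \<in> Vm m" if g: "g \<in> carrier G" for g
      unfolding dY_def dE_def using rL[OF g] rL[OF g0] y(1) e0_Vm[of m]
      by (auto intro!: Vm_add Vm_scale simp: linB_def)
    have dL: "dY g \<in> L2" "dE g \<in> L2" if g: "g \<in> carrier G" for g
      using dV[OF g] Vm_L2 by auto
    have bnd: "norm (nrm2 (vadd (\<rho>' g v) (vscale (-1) (\<rho>' g0 v)))) \<le> 2 * nrm2 (dY g) + 2 * ((cmod c)\<^sup>2 * nrm2 (dE g))"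
      if g: "g \<in> carrier G" for g
    proof -
      have eq: "vadd (\<rho>' g v) (vscale (-1) (\<rho>' g0 v)) = vadd (dY g) (vscale (- c) (dE g))"
        unfolding rv[OF g] rv[OF g0] dY_def dE_def by (auto simp: vadd_def vscale_def algebra_simps)
      have "nrm2 (vadd (dY g) (vscale (- c) (dE g))) \<le> 2 * nrm2 (dY g) + 2 * nrm2 (vscale (- c) (dE g))"
        by (rule nrm2_add_le[OF dL(1)[OF g] L2_scale[OF dL(2)[OF g]]])
      moreover have "nrm2 (vadd (dY g) (vscale (- c) (dE g))) \<ge> 0"
        by (intro nrm2_nonneg L2_add L2_scale dL g)
      ultimately show ?thesis unfolding eq nrm2_scale[OF dL(2)[OF g]] by simp
    qed
    have "((\<lambda>g. nrm2 (vadd (\<rho>' g v) (vscale (-1) (\<rho>' g0 v)))) \<longlongrightarrow> 0) (nhdsin T g0)"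
    proof (rule Lim_null_comparison)
      show "eventually (\<lambda>g. norm (nrm2 (vadd (\<rho>' g v) (vscale (-1) (\<rho>' g0 v)))) \<le> 2 * nrm2 (dY g) + 2 * ((cmod c)\<^sup>2 * nrm2 (dE g))) (nhdsin T g0)"
        using X by (rule eventually_mono) (rule bnd)
      have "((\<lambda>g. 2 * nrm2 (dY g) + 2 * ((cmod c)\<^sup>2 * nrm2 (dE g))) \<longlongrightarrow> 2 * 0 + 2 * ((cmod c)\<^sup>2 * 0)) (nhdsin T g0)"
        by (intro tendsto_intros lY lE)
      thus "((\<lambda>g. 2 * nrm2 (dY g) + 2 * ((cmod c)\<^sup>2 * nrm2 (dE g))) \<longlongrightarrow> 0) (nhdsin T g0)" by simp
    qed
    hence "((\<lambda>g. l2dist (\<rho>' g v) (\<rho>' g0 v)) \<longlongrightarrow> sqrt 0) (nhdsin T g0)" unfolding l2dist_nrm2 by (rule tendsto_real_sqrt)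
    hence "eventually (\<lambda>g. l2dist (\<rho>' g v) (\<rho>' g0 v) < e) (nhdsin T g0)" using e by (intro order_tendstoD(2)) auto
    thus "\<exists>U. openin T U \<and> g0 \<in> U \<and> (\<forall>g\<in>U. l2dist (\<rho>' g v) (\<rho>' g0 v) < e)"
      unfolding eventually_nhdsin using g0 top by auto
  qed
  have "is_lift G T m \<rho> \<rho>'" unfolding is_lift_def using rU rim hom cont by blast
  thus ?thesis by blast
qed

end
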